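(* Let $\sigma>0$, $\lambda>0$, $\nu\in(0,\pi/2)$ and $\kappa_1\in(0,1)$. Then there exists $\hat\varepsilon=\hat\varepsilon(\lambda,\nu)>0$ such that for any $\varepsilon\in(0,\hat\varepsilon)$ there exists $\delta_\varepsilon\in(0,\kappa_1)$ with the following property: for any $\kappa\in(0,\delta_\varepsilon]$, the solution $(x(t),y(t))$ of \[ x'=y,\qquad y'=-\lambda a^+(t)g(x) \] with $x(0)=\kappa$, $y(0)=0$ satisfies \[ -\nu\le\arctan\Bigl(\frac{y(t)}{x(t)}\Bigr)\le0\quad\text{for all }t\in[0,\sigma]. \]
   Context: $a\in L^1(0,\sigma)$ with positive part $a^+$. $g\colon\mathbb{R}\to[0,+\infty)$ is the extension by zero outside $[0,1]$ of a locally Lipschitz continuous function $g\colon[0,1]\to[0,+\infty)$ with $g(0)=g(1)=0$, $g(s)>0$ for $0<s<1$ and $\lim_{s\to0^+}g(s)/s=0$. Solutions are in the Carathéodory sense on $[0,\sigma]$. *)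

theory Defs
  imports "HOL-Analysis.Analysis"
begin

definition pos_part :: "(real \<Rightarrow> real) \<Rightarrow> real \<Rightarrow> real" where
  "pos_part a t = max (a t) 0"

definition admissible_g :: "(real \<Rightarrow> real) \<Rightarrow> bool" where
  "admissible_g g \<longleftrightarrow>
     (\<forall>s. s \<notin> {0..1} \<longrightarrow> g s = 0) \<and>
     (\<forall>s\<in>{0..1}. \<exists>e>0. \<exists>L. L-lipschitz_on (cball s e \<inter> {0..1}) g) \<and>
     (\<forall>s\<in>{0..1}. g s \<ge> 0) \<and>
     g 0 = 0 \<and> g 1 = 0 \<and>
     (\<forall>s. 0 < s \<and> s < 1 \<longrightarrow> g s > 0) \<and>
     ((\<lambda>s. g s / s) \<longlongrightarrow> 0) (at_right 0)"

text \<open>Caratheodory solution on [0,sigma] of x' = y, y' = - lam a^+(t) g(x):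
  x, y absolutely continuous, i.e. given by the integral equations with
  Lebesgue integrable right-hand sides.\<close>
definition cara_solution ::
  "real \<Rightarrow> real \<Rightarrow> (real \<Rightarrow> real) \<Rightarrow> (real \<Rightarrow> real) \<Rightarrow> (real \<Rightarrow> real) \<Rightarrow> (real \<Rightarrow> real) \<Rightarrow> bool" where
  "cara_solution \<sigma> lam a g x y \<longleftrightarrow>
     y absolutely_integrable_on {0..\<sigma>} \<and>
     (\<lambda>s. lam * pos_part a s * g (x s)) absolutely_integrable_on {0..\<sigma>} \<and>
     (\<forall>t\<in>{0..\<sigma>}. x t = x 0 + integral {0..t} y \<and>
                   y t = y 0 - integral {0..t} (\<lambda>s. lam * pos_part a s * g (x s)))"

end

theory Submission
  imports Defs
begin

theorem lemma2p3:
  fixes \<sigma> lam \<nu> \<kappa>1 :: real and a g :: "real \<Rightarrow> real"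
  assumes "\<sigma> > 0" and "lam > 0" and "0 < \<nu>" and "\<nu> < pi / 2"
    and "0 < \<kappa>1" and "\<kappa>1 < 1"
    and "a absolutely_integrable_on {0..\<sigma>}"
    and "admissible_g g"
  shows "\<exists>\<epsilon>_hat::real > 0. \<forall>\<epsilon>::real. 0 < \<epsilon> \<and> \<epsilon> < \<epsilon>_hat \<longrightarrow>
           (\<exists>\<delta>. 0 < \<delta> \<and> \<delta> < \<kappa>1 \<and>
              (\<forall>\<kappa> x y. 0 < \<kappa> \<and> \<kappa> \<le> \<delta> \<and> cara_solution \<sigma> lam a g x y
                   \<and> x 0 = \<kappa> \<and> y 0 = 0 \<longrightarrow>
                 (\<forall>t\<in>{0..\<sigma>}. x t \<noteq> 0 \<and> - \<nu> \<le> arctan (y t / x t) \<and> arctan (y t / x t) \<le> 0)))"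
proof -
  note adm = assms(8)[unfolded admissible_g_def]
  have gout: "\<And>s. s \<notin> {0..1} \<Longrightarrow> g s = 0" using adm by blast
  have gnn: "\<And>s. 0 \<le> g s"
  proof -
    fix s show "0 \<le> g s" using adm by (cases "s \<in> {0..1}") auto
  qed
  have g0: "g 0 = 0" using adm by blast
  have glim: "((\<lambda>s. g s / s) \<longlongrightarrow> 0) (at_right 0)" using adm by blast
  have aint: "a integrable_on {0..\<sigma>}" and absint: "(\<lambda>s. \<bar>a s\<bar>) integrable_on {0..\<sigma>}"
    using assms(7) by (auto simp: absolutely_integrable_on_def)
  define A where "A = integral {0..\<sigma>} (\<lambda>s. \<bar>a s\<bar>)"
  have A0: "0 \<le> A" unfolding A_def by (rule integral_nonneg[OF absint]) auto
  define B where "B = A + 1"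
  have B0: "0 < B" using A0 B_def by simp
  have tpos: "0 < tan \<nu>" using tan_gt_zero assms(3,4) by blast
  define \<eta> where "\<eta> = min (1/(2*\<sigma>*lam*B)) (tan \<nu>/(2*lam*B))"
  have eta0: "0 < \<eta>" unfolding \<eta>_def using B0 tpos assms(1,2) by simp
  have eta1: "\<eta> * (2*\<sigma>*lam*B) \<le> 1"
  proof -
    have "\<eta> \<le> 1/(2*\<sigma>*lam*B)" unfolding \<eta>_def by simp
    then show ?thesis using B0 assms(1,2) by (simp add: field_simps)
  qed
  have eta2: "\<eta> * (2*lam*B) \<le> tan \<nu>"
  proof -
    have "\<eta> \<le> tan \<nu>/(2*lam*B)" unfolding \<eta>_def by simp
    then show ?thesis using B0 assms(1,2) by (simp add: field_simps)
  qed
  have "\<forall>\<^sub>F s in at_right 0. g s / s < \<eta>"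
    using order_tendstoD(2)[OF glim eta0] .
  then obtain d where d0: "d > 0" and dP: "\<And>s. s > 0 \<Longrightarrow> s < d \<Longrightarrow> g s / s < \<eta>"
    unfolding eventually_at_right_field by auto
  define \<delta> where "\<delta> = min (d/2) (\<kappa>1/2)"
  have del: "0 < \<delta>" "\<delta> < \<kappa>1" "\<delta> < d" unfolding \<delta>_def using d0 assms(5) by auto
  have main: "\<forall>t\<in>{0..\<sigma>}. x t \<noteq> 0 \<and> - \<nu> \<le> arctan (y t / x t) \<and> arctan (y t / x t) \<le> 0"
    if k: "0 < \<kappa>" "\<kappa> \<le> \<delta>" and sol: "cara_solution \<sigma> lam a g x y" and x0: "x 0 = \<kappa>" and y0: "y 0 = 0"
    for \<kappa> x y
  proof
    fix t assume t: "t \<in> {0..\<sigma>}"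
    define F where "F = (\<lambda>s. lam * pos_part a s * g (x s))"
    have yint: "y integrable_on {0..\<sigma>}" and Fint: "F integrable_on {0..\<sigma>}"
      and eqs: "\<And>t. t \<in> {0..\<sigma>} \<Longrightarrow> x t = \<kappa> + integral {0..t} y \<and> y t = 0 - integral {0..t} F"
      using sol x0 y0 unfolding cara_solution_def F_def absolutely_integrable_on_def by auto
    have Fnn: "\<And>s. 0 \<le> F s" unfolding F_def pos_part_def using gnn assms(2) by simp
    have sub: "\<And>u. u \<in> {0..\<sigma>} \<Longrightarrow> {0..u} \<subseteq> {0..\<sigma>}" by auto
    have yle: "y u \<le> 0" if u: "u \<in> {0..\<sigma>}" for u
    proof -
      have "0 \<le> integral {0..u} F"
        using integral_nonneg[OF integrable_on_subinterval[OF Fint sub[OF u]]] Fnn by blast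
      then show ?thesis using eqs[OF u] by simp
    qed
    have xle: "x u \<le> \<kappa>" if u: "u \<in> {0..\<sigma>}" for u
    proof -
      have "integral {0..u} y \<le> integral {0..u} (\<lambda>_. 0::real)"
        by (rule integral_le[OF integrable_on_subinterval[OF yint sub[OF u]]]) (use yle u in auto)
      then show ?thesis using eqs[OF u] by simp
    qed
    have gk: "g (x s) \<le> \<eta> * \<kappa>" if s: "s \<in> {0..\<sigma>}" for s
    proof (cases "x s \<le> 0")
      case True
      then have "g (x s) = 0" using gout g0 by (cases "x s = 0") auto
      then show ?thesis using eta0 k by simp
    next
      case False
      have "x s < d" using xle[OF s] k del by simp
      then have "g (x s) / x s < \<eta>" using dP False by simp
      then have "g (x s) < \<eta> * x s" using False by (simp add: divide_less_eq)
      also have "\<dots> \<le> \<eta> * \<kappa>" using xle[OF s] eta0 by simp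
      finally show ?thesis by simp
    qed
    define C where "C = lam * \<eta> * \<kappa> * B"
    have Fle: "F s \<le> (lam*\<eta>*\<kappa>) * \<bar>a s\<bar>" if s: "s \<in> {0..\<sigma>}" for s
    proof -
      have "pos_part a s \<le> \<bar>a s\<bar>" "0 \<le> pos_part a s" unfolding pos_part_def by auto
      then have "pos_part a s * g (x s) \<le> \<bar>a s\<bar> * (\<eta> * \<kappa>)"
        using gk[OF s] gnn by (intro mult_mono) auto
      then show ?thesis unfolding F_def using assms(2)
        by (metis mult.assoc mult.commute mult_left_mono less_imp_le)
    qed
    have absub: "(\<lambda>s. \<bar>a s\<bar>) integrable_on {0..t}" using integrable_on_subinterval[OF absint sub[OF t]] .
    have "integral {0..t} F \<le> integral {0..t} (\<lambda>s. (lam*\<eta>*\<kappa>) * \<bar>a s\<bar>)"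
      by (rule integral_le[OF integrable_on_subinterval[OF Fint sub[OF t]]])
        (use integrable_on_cmult_left[OF absub] Fle t in auto)
    also have "\<dots> = (lam*\<eta>*\<kappa>) * integral {0..t} (\<lambda>s. \<bar>a s\<bar>)" by simp
    also have "\<dots> \<le> (lam*\<eta>*\<kappa>) * A"
    proof -
      have "integral {0..t} (\<lambda>s. \<bar>a s\<bar>) \<le> A" unfolding A_def
        by (rule integral_subset_le[OF sub[OF t] absub absint]) auto
      then show ?thesis using assms(2) eta0 k by (intro mult_left_mono) auto
    qed
    also have "\<dots> \<le> C" unfolding C_def B_def using assms(2) eta0 k by simp
    finally have yge: "- C \<le> y t" using eqs[OF t] by simp
    have yge': "- C \<le> y u" if u: "u \<in> {0..\<sigma>}" for u
    proof -
      have absub: "(\<lambda>s. \<bar>a s\<bar>) integrable_on {0..u}" using integrable_on_subinterval[OF absint sub[OF u]] .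
      have "integral {0..u} F \<le> integral {0..u} (\<lambda>s. (lam*\<eta>*\<kappa>) * \<bar>a s\<bar>)"
        by (rule integral_le[OF integrable_on_subinterval[OF Fint sub[OF u]]])
          (use integrable_on_cmult_left[OF absub] Fle u in auto)
      also have "\<dots> = (lam*\<eta>*\<kappa>) * integral {0..u} (\<lambda>s. \<bar>a s\<bar>)" by simp
      also have "\<dots> \<le> (lam*\<eta>*\<kappa>) * A"
      proof -
        have "integral {0..u} (\<lambda>s. \<bar>a s\<bar>) \<le> A" unfolding A_def
          by (rule integral_subset_le[OF sub[OF u] absub absint]) auto
        then show ?thesis using assms(2) eta0 k by (intro mult_left_mono) auto
      qed
      also have "\<dots> \<le> C" unfolding C_def B_def using assms(2) eta0 k by simp
      finally show ?thesis using eqs[OF u] by simp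
    qed
    have "integral {0..t} (\<lambda>_. - C) \<le> integral {0..t} y"
      by (rule integral_le[OF _ integrable_on_subinterval[OF yint sub[OF t]]]) (use yge' t in auto)
    moreover have "integral {0..t} (\<lambda>_. - C) = - C * t" using t by simp
    moreover have t0: "0 \<le> t" using t by simp
    ultimately have IY: "- C * t \<le> integral {0..t} y" by (simp add: mult.commute)
    moreover have "C * t \<le> C * \<sigma>" using t eta0 assms(2) k B0 unfolding C_def by (intro mult_left_mono) auto
    moreover have "C * \<sigma> * 2 \<le> \<kappa>"
    proof -
      have "C * \<sigma> * 2 = \<kappa> * (\<eta> * (2*\<sigma>*lam*B))" unfolding C_def by simp
      also have "\<dots> \<le> \<kappa> * 1" using eta1 k by (intro mult_left_mono) auto
      finally show ?thesis by simp
    qed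
    ultimately have xge: "\<kappa>/2 \<le> x t" using eqs[OF t] IY by linarith
    have C2: "C * 2 \<le> \<kappa> * tan \<nu>"
    proof -
      have "C * 2 = \<kappa> * (\<eta> * (2*lam*B))" unfolding C_def by simp
      also have "\<dots> \<le> \<kappa> * tan \<nu>" using eta2 k by (intro mult_left_mono) auto
      finally show ?thesis .
    qed
    have xpos: "0 < x t" using xge k by simp
    have "- tan \<nu> * x t \<le> - tan \<nu> * (\<kappa>/2)" using xge tpos by simp
    also have "\<dots> \<le> - C" using C2 by (simp add: mult.commute)
    also have "\<dots> \<le> y t" by (rule yge)
    finally have "- tan \<nu> \<le> y t / x t" using xpos by (simp add: le_divide_eq)
    then have "arctan (- tan \<nu>) \<le> arctan (y t / x t)" by (rule arctan_monotone')
    moreover have "arctan (- tan \<nu>) = - \<nu>" using arctan_tan assms(3,4) arctan_minus by simp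
    moreover have "y t / x t \<le> 0" using yle[OF t] xpos by (simp add: divide_nonpos_pos)
    then have "arctan (y t / x t) \<le> 0" using arctan_monotone'[of "y t / x t" 0] by simp
    ultimately show "x t \<noteq> 0 \<and> - \<nu> \<le> arctan (y t / x t) \<and> arctan (y t / x t) \<le> 0"
      using xpos by simp
  qed
  show ?thesis
  proof (rule exI[of _ 1], intro conjI allI impI)
    fix \<epsilon> :: real
    show "\<exists>\<delta>. 0 < \<delta> \<and> \<delta> < \<kappa>1 \<and>
              (\<forall>\<kappa> x y. 0 < \<kappa> \<and> \<kappa> \<le> \<delta> \<and> cara_solution \<sigma> lam a g x y
                   \<and> x 0 = \<kappa> \<and> y 0 = 0 \<longrightarrow>
                 (\<forall>t\<in>{0..\<sigma>}. x t \<noteq> 0 \<and> - \<nu> \<le> arctan (y t / x t) \<and> arctan (y t / x t) \<le> 0))"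
      apply (rule exI[of _ \<delta>])
      using del main by (metis (no_types, lifting))
  qed simp
qed

end
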